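(* Let $\omega\in\Bbbk\setminus\{0,1\}$ and let $\phi$ be the automorphism of $A$ with $\phi(x)=\omega x$, $\phi(y)=\omega^{N-1}y$. If $N=1$ then $\mathrm{H}^1(A,{}_\phi A)=0$. If $N\ge2$, then $\mathrm{H}^1(A,{}_\phi A)$ has Hilbert series $0$ when $\omega^{N-1}\ne1$, and $\dfrac{1}{t(1-t^{N-1})}$ when $\omega^{N-1}=1$.
   Context: Let $\Bbbk$ be a field of characteristic zero and $N\ge1$ an integer. Let $A=A_N$ be the $\Bbbk$-algebra generated by $x,y$ subject to $yx-xy=x^N$, graded with $x$ in degree $1$ and $y$ in degree $N-1$. For an automorphism $\phi$, a $\phi$-twisted derivation is a linear map $\partial:A\to A$ with $\partial(ab)=\partial(a)b+\phi(a)\partial(b)$; it is inner if of the form $a\mapsto ma-\phi(a)m$ for some $m\in A$. ${}_\phi A$ is $A$ with left action twisted by $\phi$, and $\mathrm{H}^1(A,{}_\phi A)$ is the quotient of $\phi$-twisted derivations by inner ones, graded by degree of homogeneous twisted derivations ($\partial(A_p)\subseteq A_{p+l}$), which makes sense since $\phi$ is homogeneous. *)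

theory Defs
  imports Main
begin

text \<open>Abstract presentation of the algebra A_N over a field k (type 'k):
  'a is a ring, emb : 'k -> 'a is the structure map (a central ring
  homomorphism, so 'a is a k-algebra with scalar action c . a = emb c * a),
  x, y satisfy y x - x y = x^N, and the monomials x^i y^j form a k-basis.\<close>

definition mono_comb :: "('k \<Rightarrow> 'a::ring_1) \<Rightarrow> 'a \<Rightarrow> 'a \<Rightarrow> (nat \<times> nat) set \<Rightarrow> (nat \<Rightarrow> nat \<Rightarrow> 'k) \<Rightarrow> 'a" where
  "mono_comb emb x y S c = (\<Sum>(i, j)\<in>S. emb (c i j) * x ^ i * y ^ j)"

definition is_k_algebra :: "('k::field \<Rightarrow> 'a::ring_1) \<Rightarrow> bool" where
  "is_k_algebra emb \<longleftrightarrow>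
     emb 1 = 1 \<and> (\<forall>a b. emb (a + b) = emb a + emb b) \<and>
     (\<forall>a b. emb (a * b) = emb a * emb b) \<and> (\<forall>c u. emb c * u = u * emb c)"

definition is_A_N :: "('k::field \<Rightarrow> 'a::ring_1) \<Rightarrow> nat \<Rightarrow> 'a \<Rightarrow> 'a \<Rightarrow> bool" where
  "is_A_N emb N x y \<longleftrightarrow>
     is_k_algebra emb \<and>
     y * x - x * y = x ^ N \<and>
     (\<forall>u. \<exists>S c. finite S \<and> u = mono_comb emb x y S c) \<and>
     (\<forall>S c. finite S \<longrightarrow> mono_comb emb x y S c = 0 \<longrightarrow> (\<forall>(i, j)\<in>S. c i j = 0))"

definition graded_piece :: "('k::field \<Rightarrow> 'a::ring_1) \<Rightarrow> nat \<Rightarrow> 'a \<Rightarrow> 'a \<Rightarrow> int \<Rightarrow> 'a set" where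
  "graded_piece emb N x y p =
     {u. \<exists>S c. finite S \<and> (\<forall>(i, j)\<in>S. int i + int (N - 1) * int j = p) \<and>
              u = mono_comb emb x y S c}"

definition k_linear :: "('k::field \<Rightarrow> 'a::ring_1) \<Rightarrow> ('a \<Rightarrow> 'a) \<Rightarrow> bool" where
  "k_linear emb f \<longleftrightarrow> (\<forall>u v. f (u + v) = f u + f v) \<and> (\<forall>c u. f (emb c * u) = emb c * f u)"

definition k_alg_aut :: "('k::field \<Rightarrow> 'a::ring_1) \<Rightarrow> ('a \<Rightarrow> 'a) \<Rightarrow> bool" where
  "k_alg_aut emb \<phi> \<longleftrightarrow> bij \<phi> \<and> k_linear emb \<phi> \<and> \<phi> 1 = 1 \<and> (\<forall>u v. \<phi> (u * v) = \<phi> u * \<phi> v)"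

definition twisted_der :: "('k::field \<Rightarrow> 'a::ring_1) \<Rightarrow> ('a \<Rightarrow> 'a) \<Rightarrow> ('a \<Rightarrow> 'a) \<Rightarrow> bool" where
  "twisted_der emb \<phi> d \<longleftrightarrow> k_linear emb d \<and> (\<forall>u v. d (u * v) = d u * v + \<phi> u * d v)"

definition inner_twisted :: "('a::ring_1 \<Rightarrow> 'a) \<Rightarrow> ('a \<Rightarrow> 'a) \<Rightarrow> bool" where
  "inner_twisted \<phi> d \<longleftrightarrow> (\<exists>m. \<forall>u. d u = m * u - \<phi> u * m)"

definition hom_der :: "('k::field \<Rightarrow> 'a::ring_1) \<Rightarrow> nat \<Rightarrow> 'a \<Rightarrow> 'a \<Rightarrow> ('a \<Rightarrow> 'a) \<Rightarrow> int \<Rightarrow> ('a \<Rightarrow> 'a) set" where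
  "hom_der emb N x y \<phi> l =
     {d. twisted_der emb \<phi> d \<and>
         (\<forall>p. \<forall>u\<in>graded_piece emb N x y p. d u \<in> graded_piece emb N x y (p + l))}"

definition hom_inner :: "('k::field \<Rightarrow> 'a::ring_1) \<Rightarrow> nat \<Rightarrow> 'a \<Rightarrow> 'a \<Rightarrow> ('a \<Rightarrow> 'a) \<Rightarrow> int \<Rightarrow> ('a \<Rightarrow> 'a) set" where
  "hom_inner emb N x y \<phi> l = {d \<in> hom_der emb N x y \<phi> l. inner_twisted \<phi> d}"

text \<open>dim_k (V / W) = n for a subspace W of a k-space V of maps 'a -> 'a
  (scalar action (c . f) u = emb c * f u): there are f_0..f_(n-1) in V whose
  classes modulo W are linearly independent and span V / W.\<close>
definition has_quot_dim :: "('k::field \<Rightarrow> 'a::ring_1) \<Rightarrow> ('a \<Rightarrow> 'a) set \<Rightarrow> ('a \<Rightarrow> 'a) set \<Rightarrow> nat \<Rightarrow> bool" where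
  "has_quot_dim emb V W n \<longleftrightarrow>
     (\<exists>fs. length fs = n \<and> set fs \<subseteq> V \<and>
        (\<forall>c::nat \<Rightarrow> 'k. (\<lambda>u. \<Sum>i<n. emb (c i) * (fs ! i) u) \<in> W \<longrightarrow> (\<forall>i<n. c i = 0)) \<and>
        (\<forall>f\<in>V. \<exists>c::nat \<Rightarrow> 'k. (\<lambda>u. f u - (\<Sum>i<n. emb (c i) * (fs ! i) u)) \<in> W))"

end

theory Submission
  imports Defs
begin


datatype 'a tri = Tri 'a 'a 'a

fun t1 :: "'a tri \<Rightarrow> 'a" where "t1 (Tri a b c) = a"
fun t2 :: "'a tri \<Rightarrow> 'a" where "t2 (Tri a b c) = b"
fun t3 :: "'a tri \<Rightarrow> 'a" where "t3 (Tri a b c) = c"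

instantiation tri :: (ring_1) ring_1
begin
definition "0 = Tri 0 0 0"
definition "1 = Tri 1 0 1"
definition "A + B = Tri (t1 A + t1 B) (t2 A + t2 B) (t3 A + t3 B)"
definition "A - B = Tri (t1 A - t1 B) (t2 A - t2 B) (t3 A - t3 B)"
definition "- A = Tri (- t1 A) (- t2 A) (- t3 A)"
definition "A * B = Tri (t1 A * t1 B) (t1 A * t2 B + t2 A * t3 B) (t3 A * t3 B)"
instance
proof
  fix a b c :: "'a tri"
  show "a * b * c = a * (b * c)"
    by (cases a; cases b; cases c) (simp add: times_tri_def algebra_simps)
  show "(a + b) * c = a * c + b * c"
    by (cases a; cases b; cases c) (simp add: times_tri_def plus_tri_def algebra_simps)
  show "a * (b + c) = a * b + a * c"
    by (cases a; cases b; cases c) (simp add: times_tri_def plus_tri_def algebra_simps)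
  show "a + b + c = a + (b + c)"
    by (cases a; cases b; cases c) (simp add: plus_tri_def algebra_simps)
  show "a + b = b + a"
    by (cases a; cases b) (simp add: plus_tri_def algebra_simps)
  show "0 + a = a"
    by (cases a) (simp add: plus_tri_def zero_tri_def)
  show "- a + a = 0"
    by (cases a) (simp add: plus_tri_def zero_tri_def uminus_tri_def)
  show "a - b = a + - b"
    by (cases a; cases b) (simp add: plus_tri_def minus_tri_def uminus_tri_def)
  show "1 * a = a"
    by (cases a) (simp add: one_tri_def times_tri_def)
  show "a * 1 = a"
    by (cases a) (simp add: one_tri_def times_tri_def)
  show "(0::'a tri) \<noteq> 1"
    by (simp add: one_tri_def zero_tri_def)
qed
end

lemma tri_mult[simp]: "Tri a b c * Tri a' b' c' = Tri (a*a') (a*b' + b*c') (c*c')"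
  by (simp add: times_tri_def)
lemma tri_add[simp]: "Tri a b c + Tri a' b' c' = Tri (a+a') (b+b') (c+c')"
  by (simp add: plus_tri_def)
lemma tri_diff[simp]: "Tri a b c - Tri a' b' c' = Tri (a-a') (b-b') (c-c')"
  by (simp add: minus_tri_def)



locale AN =
  fixes emb :: "'k::field \<Rightarrow> 'a::ring_1" and N :: nat and x y :: 'a
  assumes AN: "is_A_N emb N x y" and N1: "N \<ge> 1"
begin

lemma kalg: "is_k_algebra emb" using AN unfolding is_A_N_def by auto
lemma emb1[simp]: "emb 1 = 1" using kalg unfolding is_k_algebra_def by blast
lemma emb_add[simp]: "emb (a + b) = emb a + emb b" using kalg unfolding is_k_algebra_def by blast
lemma emb_mult[simp]: "emb (a * b) = emb a * emb b" using kalg unfolding is_k_algebra_def by blast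
lemma emb_central: "emb c * u = u * emb c" using kalg unfolding is_k_algebra_def by blast
lemma emb0[simp]: "emb 0 = 0"
proof -
  have "emb 0 = emb 0 + emb 0" by (simp only: emb_add[symmetric]) simp
  then show ?thesis by simp
qed
lemma emb_uminus[simp]: "emb (- a) = - emb a"
proof -
  have "emb a + emb (-a) = 0" by (simp only: emb_add[symmetric]) simp
  then have "- emb a = emb (- a)" by (rule minus_unique)
  then show ?thesis by simp
qed
lemma emb_diff[simp]: "emb (a - b) = emb a - emb b"
  by (simp only: diff_conv_add_uminus emb_add emb_uminus)
lemma emb_of_nat: "emb (of_nat n) = of_nat n"
  by (induction n) simp_all
lemma emb_power: "emb (a ^ n) = emb a ^ n"
  by (induction n) simp_all
lemma emb_inj0: assumes "emb a = 0" shows "a = 0"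
proof (rule ccontr)
  assume "a \<noteq> 0"
  then have "emb (a * inverse a) = 1" by simp
  then have "emb a * emb (inverse a) = 1" by (simp only: emb_mult)
  then show False using assms by simp
qed

lemma rel: "y * x - x * y = x ^ N" using AN unfolding is_A_N_def by auto
lemma rel': "y * x = x * y + x ^ N" using rel by (simp add: algebra_simps)
lemma span: "\<exists>S c. finite S \<and> u = mono_comb emb x y S c" using AN unfolding is_A_N_def by auto
lemma indep: "finite S \<Longrightarrow> mono_comb emb x y S c = 0 \<Longrightarrow> (i,j)\<in>S \<Longrightarrow> c i j = 0"
  using AN unfolding is_A_N_def by fastforce

abbreviation mc where "mc S c \<equiv> mono_comb emb x y S c"

lemma mc_lin: "mc S (\<lambda>i j. a * c i j + b * c' i j) = emb a * mc S c + emb b * mc S c'"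
  unfolding mono_comb_def
  by (simp add: case_prod_beta' sum_distrib_left sum.distrib algebra_simps)

lemma mc_extend: "finite S' \<Longrightarrow> S \<subseteq> S' \<Longrightarrow> (\<forall>i j. (i,j) \<in> S' - S \<longrightarrow> c i j = 0) \<Longrightarrow> mc S' c = mc S c"
  unfolding mono_comb_def
  by (rule sum.mono_neutral_right) auto

lemma rep_unique:
  assumes "finite S" "finite S'" "\<forall>i j. (i,j) \<notin> S \<longrightarrow> c i j = 0"
    "\<forall>i j. (i,j) \<notin> S' \<longrightarrow> c' i j = 0" "mc S c = mc S' c'"
  shows "c = c'"
proof -
  let ?T = "S \<union> S'"
  have "mc ?T c = mc S c" by (rule mc_extend) (use assms in auto)
  moreover have "mc ?T c' = mc S' c'" by (rule mc_extend) (use assms in auto)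
  ultimately have "mc ?T (\<lambda>i j. 1 * c i j + (-1) * c' i j) = 0"
    using assms(5) by (simp only: mc_lin) simp
  then have "\<forall>(i,j)\<in>?T. 1 * c i j + (-1) * c' i j = 0"
    using indep[of ?T] assms(1,2) by blast
  note h = this
  show ?thesis
  proof (intro ext)
    fix i j show "c i j = c' i j"
    proof (cases "(i,j) \<in> ?T")
      case True then show ?thesis using h by fastforce
    next
      case False then show ?thesis using assms(3,4) by auto
    qed
  qed
qed

lemma rep_ex: "\<exists>c S. finite S \<and> (\<forall>i j. (i,j) \<notin> S \<longrightarrow> c i j = 0) \<and> u = mc S c"
proof -
  obtain S c0 where S: "finite S" "u = mc S c0" using span by blast
  let ?c = "\<lambda>i j. if (i,j) \<in> S then c0 i j else 0"
  have "mc S ?c = mc S c0" unfolding mono_comb_def by (rule sum.cong) auto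
  then show ?thesis using S by (intro exI[of _ ?c] exI[of _ S]) auto
qed

definition coef :: "'a \<Rightarrow> nat \<Rightarrow> nat \<Rightarrow> 'k" where
  "coef u = (THE c. \<exists>S. finite S \<and> (\<forall>i j. (i,j) \<notin> S \<longrightarrow> c i j = 0) \<and> u = mc S c)"

lemma coef_unique:
  assumes "finite S" "\<forall>i j. (i,j) \<notin> S \<longrightarrow> c i j = 0" "u = mc S c"
  shows "coef u = c"
  unfolding coef_def
proof (rule the_equality)
  show "\<exists>S. finite S \<and> (\<forall>i j. (i,j) \<notin> S \<longrightarrow> c i j = 0) \<and> u = mc S c" using assms by blast
next
  fix c' assume "\<exists>S. finite S \<and> (\<forall>i j. (i,j) \<notin> S \<longrightarrow> c' i j = 0) \<and> u = mc S c'"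
  then obtain S' where "finite S'" "\<forall>i j. (i,j) \<notin> S' \<longrightarrow> c' i j = 0" "u = mc S' c'" by blast
  then show "c' = c" using rep_unique[of S' S c' c] assms by auto
qed

lemma coef_rep: "\<exists>S. finite S \<and> (\<forall>i j. (i,j) \<notin> S \<longrightarrow> coef u i j = 0) \<and> u = mc S (coef u)"
proof -
  obtain c S where cS: "finite S" "\<forall>i j. (i,j) \<notin> S \<longrightarrow> c i j = 0" "u = mc S c" using rep_ex[of u] by metis
  then have e: "coef u = c" by (rule coef_unique)
  have "finite S \<and> (\<forall>i j. (i,j) \<notin> S \<longrightarrow> coef u i j = 0) \<and> u = mc S (coef u)"
    unfolding e using cS by simp
  then show ?thesis by (rule exI)
qed

definition supp :: "'a \<Rightarrow> (nat \<times> nat) set" where "supp u = {(i,j). coef u i j \<noteq> 0}"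

lemma finite_supp: "finite (supp u)"
proof -
  obtain S where "finite S" "\<forall>i j. (i,j) \<notin> S \<longrightarrow> coef u i j = 0" using coef_rep by blast
  then have "supp u \<subseteq> S" unfolding supp_def by auto
  then show ?thesis using \<open>finite S\<close> finite_subset by blast
qed

lemma expand: "u = mc (supp u) (coef u)"
proof -
  obtain S where S: "finite S" "\<forall>i j. (i,j) \<notin> S \<longrightarrow> coef u i j = 0" "u = mc S (coef u)"
    using coef_rep by blast
  then have "supp u \<subseteq> S" unfolding supp_def by auto
  then have "mc S (coef u) = mc (supp u) (coef u)"
    by (intro mc_extend) (use S in \<open>auto simp: supp_def\<close>)
  with S(3) show ?thesis by (rule trans)
qed

lemma coef_mc: "finite S \<Longrightarrow> coef (mc S c) = (\<lambda>i j. if (i,j) \<in> S then c i j else 0)"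
proof -
  assume S: "finite S"
  have "mc S c = mc S (\<lambda>i j. if (i,j) \<in> S then c i j else 0)"
    unfolding mono_comb_def by (rule sum.cong) auto
  then show ?thesis by (intro coef_unique[OF S]) auto
qed

lemma coef_inject: assumes h: "coef u = coef v" shows "u = v"
proof -
  have s: "supp u = supp v" using h by (simp add: supp_def)
  have "u = mc (supp u) (coef u)" by (rule expand)
  also have "\<dots> = mc (supp v) (coef v)" using h s by simp
  also have "\<dots> = v" by (rule expand[symmetric])
  finally show ?thesis .
qed

lemma coef_lin: "coef (emb a * u + emb b * v) = (\<lambda>i j. a * coef u i j + b * coef v i j)"
proof -
  let ?T = "supp u \<union> supp v"
  have T: "finite ?T" using finite_supp by auto
  have "mc ?T (coef u) = mc (supp u) (coef u)"
    by (rule mc_extend[OF T]) (auto simp: supp_def)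
  also have "\<dots> = u" by (rule expand[symmetric])
  finally have u: "mc ?T (coef u) = u" .
  have "mc ?T (coef v) = mc (supp v) (coef v)"
    by (rule mc_extend[OF T]) (auto simp: supp_def)
  also have "\<dots> = v" by (rule expand[symmetric])
  finally have v: "mc ?T (coef v) = v" .
  have "emb a * u + emb b * v = mc ?T (\<lambda>i j. a * coef u i j + b * coef v i j)"
    by (simp only: mc_lin u v)
  then show ?thesis by (intro coef_unique[OF T]) (auto simp: supp_def)
qed

lemma coef_add: "coef (u + v) = (\<lambda>i j. coef u i j + coef v i j)"
  using coef_lin[of 1 u 1 v] by simp
lemma coef_scale: "coef (emb a * u) = (\<lambda>i j. a * coef u i j)"
  using coef_lin[of a u 0 u] by simp
lemma coef_zero: "coef 0 = (\<lambda>i j. 0)"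
  using coef_scale[of 0 0] by simp
lemma coef_neg: "coef (- u) = (\<lambda>i j. - coef u i j)"
  using coef_scale[of "-1" u] by simp
lemma coef_diff: "coef (u - v) = (\<lambda>i j. coef u i j - coef v i j)"
  using coef_lin[of 1 u "-1" v] by simp
lemma coef_sum: "finite A \<Longrightarrow> coef (sum f A) = (\<lambda>i j. \<Sum>t\<in>A. coef (f t) i j)"
  by (induction A rule: finite_induct) (auto simp: coef_zero coef_add)
lemma coef_smono: "coef (emb a * x ^ i * y ^ j) = (\<lambda>i' j'. if i' = i \<and> j' = j then a else 0)"
proof -
  have "emb a * x ^ i * y ^ j = mc {(i,j)} (\<lambda>_ _. a)" unfolding mono_comb_def by simp
  then show ?thesis by (simp add: coef_mc)
qed
lemma coef_mono: "coef (x ^ i * y ^ j) = (\<lambda>i' j'. if i' = i \<and> j' = j then 1 else 0)"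
  using coef_smono[of 1 i j] by simp
lemma zero_iff: "u = 0 \<longleftrightarrow> (\<forall>i j. coef u i j = 0)"
proof
  assume "u = 0" then show "\<forall>i j. coef u i j = 0" by (simp add: coef_zero)
next
  assume "\<forall>i j. coef u i j = 0"
  then have "coef u = coef 0" by (auto simp: coef_zero)
  then show "u = 0" by (rule coef_inject)
qed

lemma supp_induct:
  assumes "P 0" "\<And>a b. P a \<Longrightarrow> P b \<Longrightarrow> P (a + b)"
    "\<And>i j. coef u i j \<noteq> 0 \<Longrightarrow> P (emb (coef u i j) * x ^ i * y ^ j)"
  shows "P u"
proof -
  have "\<And>B. finite B \<Longrightarrow> B \<subseteq> supp u \<Longrightarrow> P (mc B (coef u))"
  proof -
    fix B :: "(nat \<times> nat) set"
    assume "finite B" "B \<subseteq> supp u"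
    then show "P (mc B (coef u))"
    proof (induction B rule: finite_induct)
      case empty then show ?case using assms(1) by (simp add: mono_comb_def)
    next
      case (insert p F)
      obtain i j where p: "p = (i,j)" by force
      have "mc (insert p F) (coef u) = emb (coef u i j) * x ^ i * y ^ j + mc F (coef u)"
        using insert p by (simp add: mono_comb_def)
      moreover have "coef u i j \<noteq> 0" using insert p by (auto simp: supp_def)
      ultimately show ?case using insert assms by auto
    qed
  qed
  from this[of "supp u", OF finite_supp] have "P (mc (supp u) (coef u))" by simp
  moreover have "mc (supp u) (coef u) = u" by (rule expand[symmetric])
  ultimately show ?thesis by simp
qed

end


lemma yXpow:
  fixes X Y :: "'b::ring_1"
  assumes r: "Y * X - X * Y = X ^ N" and N: "N \<ge> 1"
  shows "Y * X ^ i = X ^ i * Y + of_nat i * X ^ (i + N - 1)"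
proof (induction i)
  case 0 then show ?case by simp
next
  case (Suc i)
  have r': "Y * X = X * Y + X ^ N" using r by (simp add: algebra_simps)
  have e: "X ^ (i + N - 1) * X = X ^ (i + N)"
    using N by (metis Suc_diff_1 add_gr_0 less_le_trans power_Suc2 zero_less_one)
  have "Y * X ^ Suc i = (Y * X ^ i) * X" by (simp only: power_Suc2 mult.assoc)
  also have "\<dots> = X ^ i * (Y * X) + of_nat i * (X ^ (i + N - 1) * X)"
    using Suc by (simp add: algebra_simps)
  also have "\<dots> = X ^ i * (X * Y + X ^ N) + of_nat i * X ^ (i + N)"
    by (simp only: r' e)
  also have "\<dots> = X ^ i * X * Y + X ^ i * X ^ N + of_nat i * X ^ (i + N)"
    by (simp only: distrib_left mult.assoc)
  also have "\<dots> = X ^ Suc i * Y + X ^ (i + N) + of_nat i * X ^ (i + N)"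
    by (simp only: power_Suc2 power_add)
  also have "\<dots> = X ^ Suc i * Y + of_nat (Suc i) * X ^ (Suc i + N - 1)"
  proof -
    have "Suc i + N - 1 = i + N" by simp
    moreover have "(of_nat (Suc i) :: 'b) * X ^ (i + N) = X ^ (i + N) + of_nat i * X ^ (i + N)"
      by (simp add: distrib_right)
    ultimately show ?thesis by (simp only: add.assoc)
  qed
  finally show ?case .
qed

lemma nz_add: "(a::'k::field) + b \<noteq> 0 \<Longrightarrow> a \<noteq> 0 \<or> b \<noteq> 0" by auto
lemma nz_diff: "(a::'k::field) \<noteq> b \<Longrightarrow> a \<noteq> 0 \<or> b \<noteq> 0" by auto

context AN
begin

definition F :: "nat \<Rightarrow> 'a set" where "F n = {u. \<forall>i j. coef u i j \<noteq> 0 \<longrightarrow> j < n}"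
definition G :: "int \<Rightarrow> 'a set" where
  "G p = {u. \<forall>i j. coef u i j \<noteq> 0 \<longrightarrow> int i + int (N - 1) * int j = p}"

lemma F_add: "u \<in> F n \<Longrightarrow> v \<in> F n \<Longrightarrow> u + v \<in> F n"
  unfolding F_def by (auto simp: coef_add dest!: nz_add)
lemma F_scale: "u \<in> F n \<Longrightarrow> emb a * u \<in> F n"
  unfolding F_def by (auto simp: coef_scale)
lemma F_zero: "0 \<in> F n"
  unfolding F_def by (auto simp: coef_zero)
lemma F_diff: "u \<in> F n \<Longrightarrow> v \<in> F n \<Longrightarrow> u - v \<in> F n"
  using F_add[of u n "emb (-1) * v"] F_scale[of v n "-1"] by simp
lemma F_mono: "u \<in> F n \<Longrightarrow> n \<le> m \<Longrightarrow> u \<in> F m"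
  unfolding F_def by fastforce
lemma F_smono: "j < n \<Longrightarrow> emb a * x ^ i * y ^ j \<in> F n"
  unfolding F_def by (auto simp: coef_smono)
lemma F0: "u \<in> F 0 \<Longrightarrow> u = 0"
  unfolding F_def zero_iff by auto
lemma F_ex: "\<exists>n. u \<in> F n"
proof -
  let ?n = "Suc (Max (snd ` supp u))"
  have "\<forall>i j. coef u i j \<noteq> 0 \<longrightarrow> j < ?n"
  proof (intro allI impI)
    fix i j assume "coef u i j \<noteq> 0"
    then have "(i,j) \<in> supp u" by (simp add: supp_def)
    then have "j \<in> snd ` supp u" by force
    then have "j \<le> Max (snd ` supp u)" using finite_supp by simp
    then show "j < ?n" by simp
  qed
  then show ?thesis unfolding F_def by blast
qed

lemma G_add: "u \<in> G p \<Longrightarrow> v \<in> G p \<Longrightarrow> u + v \<in> G p"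
  unfolding G_def by (auto simp: coef_add dest!: nz_add)
lemma G_scale: "u \<in> G p \<Longrightarrow> emb a * u \<in> G p"
  unfolding G_def by (auto simp: coef_scale)
lemma G_zero: "0 \<in> G p"
  unfolding G_def by (auto simp: coef_zero)
lemma G_diff: "u \<in> G p \<Longrightarrow> v \<in> G p \<Longrightarrow> u - v \<in> G p"
  using G_add[of u p "emb (-1) * v"] G_scale[of v p "-1"] by simp
lemma G_smono: "p = int i + int (N - 1) * int j \<Longrightarrow> emb a * x ^ i * y ^ j \<in> G p"
  unfolding G_def by (auto simp: coef_smono)
lemma G_mono: "p = int i + int (N - 1) * int j \<Longrightarrow> x ^ i * y ^ j \<in> G p"
  using G_smono[of p i j 1] by simp
lemma G_deg: "u \<in> G p \<Longrightarrow> coef u i j \<noteq> 0 \<Longrightarrow> int i + int (N - 1) * int j = p"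
  unfolding G_def by auto
lemma F_deg: "u \<in> F n \<Longrightarrow> coef u i j \<noteq> 0 \<Longrightarrow> j < n"
  unfolding F_def by auto

lemma yxi: "y * x ^ i = x ^ i * y + of_nat i * x ^ (i + N - 1)"
  by (rule yXpow[OF rel N1])

lemma emb_left: "u * (emb a * v) = emb a * (u * v)"
proof -
  have "u * (emb a * v) = (u * emb a) * v" by (simp only: mult.assoc)
  also have "\<dots> = (emb a * u) * v" by (simp only: emb_central[of a u])
  finally show ?thesis by (simp only: mult.assoc)
qed

lemma x_mono: "x * (emb a * x ^ i * y ^ j) = emb a * x ^ Suc i * y ^ j"
proof -
  have "x * (emb a * x ^ i * y ^ j) = emb a * (x * x ^ i) * y ^ j" by (simp only: mult.assoc emb_left)
  then show ?thesis by (simp only: power_Suc)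
qed

lemma y_mono: "y * (emb a * x ^ i * y ^ j) =
    emb a * x ^ i * y ^ Suc j + emb (a * of_nat i) * x ^ (i + N - 1) * y ^ j"
proof -
  have "y * (emb a * x ^ i * y ^ j) = (y * emb a) * x ^ i * y ^ j" by (simp only: mult.assoc)
  also have "\<dots> = emb a * (y * x ^ i) * y ^ j" by (simp only: mult.assoc emb_left)
  also have "\<dots> = emb a * x ^ i * y ^ Suc j + emb a * of_nat i * x ^ (i + N - 1) * y ^ j"
    by (simp add: yxi algebra_simps)
  also have "emb a * of_nat i = emb (a * of_nat i)" by (simp add: emb_of_nat)
  finally show ?thesis .
qed

lemma coef_x: "coef (x * u) = (\<lambda>i j. if i = 0 then 0 else coef u (i - 1) j)"
proof (induction u rule: supp_induct)
  case 1 then show ?case by (auto simp: coef_zero intro!: ext)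
next
  case (2 a b) then show ?case by (auto simp: distrib_left coef_add intro!: ext)
next
  case (3 i j)
  show ?case unfolding x_mono coef_smono by (auto intro!: ext)
qed

lemma x_G: assumes "u \<in> G p" shows "x * u \<in> G (p + 1)"
  unfolding G_def mem_Collect_eq
proof (intro allI impI)
  fix i j assume "coef (x * u) i j \<noteq> 0"
  then have "i \<noteq> 0" "coef u (i - 1) j \<noteq> 0" by (simp_all add: coef_x split: if_splits)
  then have "int (i - 1) + int (N - 1) * int j = p" using G_deg[OF assms] by blast
  then show "int i + int (N - 1) * int j = p + 1" using \<open>i \<noteq> 0\<close> by simp
qed
lemma x_F: assumes "u \<in> F n" shows "x * u \<in> F n"
  unfolding F_def mem_Collect_eq
proof (intro allI impI)
  fix i j assume "coef (x * u) i j \<noteq> 0"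
  then have "i \<noteq> 0" "coef u (i - 1) j \<noteq> 0" by (simp_all add: coef_x split: if_splits)
  then show "j < n" using F_deg[OF assms] by blast
qed
lemma x_cancel: "x * u = 0 \<Longrightarrow> u = 0"
proof -
  assume "x * u = 0"
  then have "\<forall>i j. coef (x * u) (Suc i) j = 0" by (simp add: coef_zero)
  then show "u = 0" unfolding coef_x zero_iff by simp
qed

lemma y_G: assumes "u \<in> G p" shows "y * u \<in> G (p + int (N - 1))"
proof (induction u rule: supp_induct)
  case 1 then show ?case by (simp add: G_zero)
next
  case (2 a b) then show ?case by (simp add: distrib_left G_add)
next
  case (3 i j)
  have d: "int i + int (N - 1) * int j = p" using G_deg[OF assms 3] .
  show ?case unfolding y_mono
    by (intro G_add G_smono) (use d N1 in \<open>auto simp: algebra_simps of_nat_diff\<close>)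
qed

lemma y_F: assumes "u \<in> F n" shows "y * u \<in> F (Suc n)"
proof (induction u rule: supp_induct)
  case 1 then show ?case by (simp add: F_zero)
next
  case (2 a b) then show ?case by (simp add: distrib_left F_add)
next
  case (3 i j)
  have d: "j < n" using F_deg[OF assms 3] .
  show ?case unfolding y_mono
    by (intro F_add F_smono) (use d in auto)
qed

lemma xpow_G: "u \<in> G p \<Longrightarrow> x ^ i * u \<in> G (p + int i)"
proof (induction i arbitrary: p u)
  case 0 then show ?case by simp
next
  case (Suc i)
  have "x * u \<in> G (p + 1)" using Suc.prems by (rule x_G)
  from Suc.IH[OF this] have "x ^ i * (x * u) \<in> G (p + 1 + int i)" .
  moreover have "x ^ Suc i * u = x ^ i * (x * u)" by (simp only: power_Suc2 mult.assoc)
  moreover have "p + 1 + int i = p + int (Suc i)" by simp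
  ultimately show ?case by simp
qed

lemma ypow_G: "u \<in> G p \<Longrightarrow> y ^ j * u \<in> G (p + int (N - 1) * int j)"
proof (induction j arbitrary: p u)
  case 0 then show ?case by simp
next
  case (Suc j)
  have "y * u \<in> G (p + int (N - 1))" using Suc.prems by (rule y_G)
  from Suc.IH[OF this] have "y ^ j * (y * u) \<in> G (p + int (N - 1) + int (N - 1) * int j)" .
  moreover have "y ^ Suc j * u = y ^ j * (y * u)" by (simp only: power_Suc2 mult.assoc)
  moreover have "p + int (N - 1) + int (N - 1) * int j = p + int (N - 1) * int (Suc j)"
    by (simp add: algebra_simps)
  ultimately show ?case by metis
qed

lemma G_mult: assumes "u \<in> G p" "v \<in> G q" shows "u * v \<in> G (p + q)"
proof (induction u rule: supp_induct)
  case 1 then show ?case by (simp add: G_zero)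
next
  case (2 a b) then show ?case by (simp add: distrib_right G_add)
next
  case (3 i j)
  have d: "int i + int (N - 1) * int j = p" using G_deg[OF assms(1) 3] .
  have "x ^ i * (y ^ j * v) \<in> G (q + int (N - 1) * int j + int i)"
    by (intro xpow_G ypow_G assms(2))
  then have "emb (coef u i j) * (x ^ i * (y ^ j * v)) \<in> G (p + q)"
    using d by (intro G_scale) (simp add: algebra_simps)
  then show ?case by (simp add: mult.assoc)
qed

end


context AN
begin

lemma xpow_F: "u \<in> F n \<Longrightarrow> x ^ i * u \<in> F n"
proof (induction i arbitrary: u)
  case 0 then show ?case by simp
next
  case (Suc i)
  have "x * u \<in> F n" using Suc.prems by (rule x_F)
  from Suc.IH[OF this] have "x ^ i * (x * u) \<in> F n" .
  moreover have "x ^ Suc i * u = x ^ i * (x * u)" by (simp only: power_Suc2 mult.assoc)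
  ultimately show ?case by simp
qed

lemma xN: "x ^ N = x * x ^ (N - 1)"
  using N1 by (metis Suc_diff_1 le_less_trans less_numeral_extra(1) not_le power_Suc le_refl
      linorder_not_less not_one_le_zero)

lemma r_lemma: "\<exists>r. y ^ j * x = x * (y ^ j + r) \<and> r \<in> F j \<and> r \<in> G (int (N - 1) * int j)"
proof (induction j)
  case 0 then show ?case by (intro exI[of _ 0]) (simp add: F_zero G_zero)
next
  case (Suc j)
  then obtain r where r: "y ^ j * x = x * (y ^ j + r)" "r \<in> F j" "r \<in> G (int (N - 1) * int j)"
    by blast
  let ?r = "y * r + x ^ (N - 1) * y ^ j + x ^ (N - 1) * r"
  have "y ^ Suc j * x = y * (y ^ j * x)" by (simp only: power_Suc mult.assoc)
  also have "\<dots> = (y * x) * (y ^ j + r)" by (simp only: r(1) mult.assoc)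
  also have "\<dots> = (x * y + x * x ^ (N - 1)) * (y ^ j + r)" by (simp only: rel' xN)
  also have "\<dots> = x * (y ^ Suc j + ?r)" by (simp add: algebra_simps)
  finally have e: "y ^ Suc j * x = x * (y ^ Suc j + ?r)" .
  have "?r \<in> F (Suc j)"
  proof (intro F_add)
    show "y * r \<in> F (Suc j)" using r(2) by (rule y_F)
    show "x ^ (N - 1) * y ^ j \<in> F (Suc j)" using F_smono[of j "Suc j" 1 "N - 1"] by simp
    show "x ^ (N - 1) * r \<in> F (Suc j)" using F_mono[OF xpow_F[OF r(2)], of "Suc j"] by simp
  qed
  moreover have "?r \<in> G (int (N - 1) * int (Suc j))"
  proof (intro G_add)
    have "y * r \<in> G (int (N - 1) * int j + int (N - 1))" using r(3) by (rule y_G)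
    then show "y * r \<in> G (int (N - 1) * int (Suc j))" by (simp add: algebra_simps)
    show "x ^ (N - 1) * y ^ j \<in> G (int (N - 1) * int (Suc j))"
      by (rule G_mono) (simp add: algebra_simps)
    have "x ^ (N - 1) * r \<in> G (int (N - 1) * int j + int (N - 1))" using r(3) by (rule xpow_G)
    then show "x ^ (N - 1) * r \<in> G (int (N - 1) * int (Suc j))" by (simp add: algebra_simps)
  qed
  ultimately show ?case using e by (intro exI[of _ ?r]) simp
qed

lemma xpow_comm: "x ^ i * x = x * x ^ i"
  by (simp only: power_Suc[symmetric] power_Suc2[symmetric])

lemma Rgen: assumes "u \<in> F (Suc n)" shows "\<exists>R\<in>F n. u * x = x * (u + R)"
proof (induction u rule: supp_induct)
  case 1 show ?case by (rule bexI[of _ 0]) (simp_all add: F_zero)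
next
  case (2 a b)
  then obtain Ra Rb where "Ra \<in> F n" "a * x = x * (a + Ra)" "Rb \<in> F n" "b * x = x * (b + Rb)"
    by blast
  then show ?case
    by (intro bexI[of _ "Ra + Rb"]) (simp_all add: F_add algebra_simps)
next
  case (3 i j)
  have jn: "j < Suc n" using F_deg[OF assms 3] .
  obtain r where r: "y ^ j * x = x * (y ^ j + r)" "r \<in> F j" using r_lemma by blast
  let ?c = "emb (coef u i j)"
  have "?c * x ^ i * y ^ j * x = ?c * x ^ i * (y ^ j * x)" by (simp only: mult.assoc)
  also have "\<dots> = ?c * ((x ^ i * x) * (y ^ j + r))" by (simp only: r(1) mult.assoc)
  also have "\<dots> = x * (?c * x ^ i * y ^ j + ?c * (x ^ i * r))"
    by (simp only: xpow_comm emb_left distrib_left mult.assoc)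
  finally have e: "?c * x ^ i * y ^ j * x = x * (?c * x ^ i * y ^ j + ?c * (x ^ i * r))" .
  have "?c * (x ^ i * r) \<in> F n"
    using F_mono[OF xpow_F[OF r(2)], of n] jn by (intro F_scale) simp
  then show ?case using e by (intro bexI[of _ "?c * (x ^ i * r)"])
qed

lemma normal: "\<exists>w. u * x = x * w"
proof -
  obtain n where "u \<in> F n" using F_ex by blast
  then have "u \<in> F (Suc n)" by (rule F_mono) simp
  then show ?thesis using Rgen by blast
qed

lemma y0_decomp_coef:
  "coef (\<Sum>j\<in>{j. coef a 0 j \<noteq> 0}. emb (coef a 0 j) * y ^ j) = (\<lambda>i j. if i = 0 then coef a 0 j else 0)"
proof -
  let ?J = "{j. coef a 0 j \<noteq> 0}"
  have fin: "finite ?J"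
  proof (rule finite_subset)
    show "?J \<subseteq> snd ` supp a" by (force simp: supp_def)
    show "finite (snd ` supp a)" using finite_supp by simp
  qed
  have e: "(\<Sum>j\<in>?J. emb (coef a 0 j) * y ^ j) = (\<Sum>j\<in>?J. emb (coef a 0 j) * x ^ 0 * y ^ j)"
    by simp
  show ?thesis
  proof (intro ext)
    fix i j
    have "coef (\<Sum>j\<in>?J. emb (coef a 0 j) * y ^ j) i j = (\<Sum>t\<in>?J. if i = 0 \<and> j = t then coef a 0 t else 0)"
      unfolding e coef_sum[OF fin] coef_smono by (simp add: eq_commute[of t j for t])
    also have "\<dots> = (if i = 0 then coef a 0 j else 0)"
    proof (cases "i = 0")
      case True
      then have "(\<Sum>t\<in>?J. if i = 0 \<and> j = t then coef a 0 t else 0) = (\<Sum>t\<in>?J. if j = t then coef a 0 t else 0)"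
        by simp
      also have "\<dots> = (if j \<in> ?J then coef a 0 j else 0)" using fin by (rule sum.delta')
      also have "\<dots> = coef a 0 j" by auto
      finally show ?thesis using True by simp
    qed simp
    finally show "coef (\<Sum>j\<in>?J. emb (coef a 0 j) * y ^ j) i j = (if i = 0 then coef a 0 j else 0)" .
  qed
qed

end


context AN
begin

lemma emb_inv_cancel: assumes "c \<noteq> 0" shows "emb (inverse c) * (emb c * m) = m"
proof -
  have "emb (inverse c) * (emb c * m) = emb (inverse c * c) * m"
    by (simp only: mult.assoc[symmetric] emb_mult)
  also have "inverse c * c = 1" using assms by simp
  finally show ?thesis by simp
qed

definition Top :: "'k \<Rightarrow> 'a \<Rightarrow> 'a" where "Top w m = m * x - emb w * x * m"

lemma Top_add: "Top w (a + b) = Top w a + Top w b"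
  unfolding Top_def by (simp add: algebra_simps)
lemma Top_diff: "Top w (a - b) = Top w a - Top w b"
  unfolding Top_def by (simp add: algebra_simps)
lemma Top_zero: "Top w 0 = 0"
  unfolding Top_def by simp
lemma Top_scale: "Top w (emb c * m) = emb c * Top w m"
proof -
  have "emb w * x * (emb c * m) = emb c * (emb w * x * m)" by (simp only: emb_left)
  then show ?thesis unfolding Top_def by (simp add: right_diff_distrib mult.assoc)
qed
lemma Top_x: "\<exists>v. Top w m = x * v"
proof -
  obtain v where "m * x = x * v" using normal by blast
  then have "Top w m = x * (v - emb w * m)"
    unfolding Top_def by (simp add: right_diff_distrib emb_left mult.assoc)
  then show ?thesis by blast
qed

lemma Top_inj_aux: assumes w: "w \<noteq> 1" shows "m \<in> F n \<Longrightarrow> Top w m = 0 \<Longrightarrow> m = 0"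
proof (induction n arbitrary: m)
  case 0 then show ?case using F0 by blast
next
  case (Suc n)
  obtain R where R: "R \<in> F n" "m * x = x * (m + R)" using Rgen[OF Suc.prems(1)] by blast
  have "Top w m = x * (emb (1 - w) * m + R)"
    unfolding Top_def R(2) by (simp add: algebra_simps emb_left mult.assoc)
  then have "emb (1 - w) * m + R = 0" using Suc.prems(2) x_cancel by simp
  then have "emb (1 - w) * m = - R" by (simp add: eq_neg_iff_add_eq_0)
  then have "emb (inverse (1 - w)) * (emb (1 - w) * m) = emb (inverse (1 - w)) * (- R)" by simp
  moreover have "emb (inverse (1 - w)) * (emb (1 - w) * m) = m"
    using w by (intro emb_inv_cancel) simp
  ultimately have "m = emb (- inverse (1 - w)) * R" by simp
  then have "m \<in> F n" using F_scale[OF R(1), of "- inverse (1 - w)"] by simp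
  then show ?case using Suc.IH Suc.prems(2) by blast
qed

lemma Top_inj: "w \<noteq> 1 \<Longrightarrow> Top w m = 0 \<Longrightarrow> m = 0"
  using Top_inj_aux F_ex by blast

lemma range_graded: assumes w: "w \<noteq> 1"
  shows "v \<in> F n \<Longrightarrow> v \<in> G p \<Longrightarrow> \<exists>m\<in>G p. x * v = Top w m"
proof (induction n arbitrary: v)
  case 0
  then have "v = 0" by (intro F0)
  then show ?case by (intro bexI[of _ 0]) (simp_all add: Top_zero G_zero)
next
  case (Suc n)
  show ?case
  proof (induction v rule: supp_induct)
    case 1 show ?case by (intro bexI[of _ 0]) (simp_all add: Top_zero G_zero)
  next
    case (2 a b)
    then obtain ma mb where "ma \<in> G p" "x * a = Top w ma" "mb \<in> G p" "x * b = Top w mb"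
      by blast
    then show ?case
      by (intro bexI[of _ "ma + mb"]) (simp_all add: G_add Top_add distrib_left)
  next
    case (3 i j)
    have jn: "j < Suc n" using F_deg[OF Suc.prems(1) 3] .
    have dg: "int i + int (N - 1) * int j = p" using G_deg[OF Suc.prems(2) 3] .
    obtain r where r: "y ^ j * x = x * (y ^ j + r)" "r \<in> F j" "r \<in> G (int (N - 1) * int j)"
      using r_lemma by blast
    let ?R = "x ^ i * r"
    have RF: "?R \<in> F n" using F_mono[OF xpow_F[OF r(2)], of n] jn by simp
    have RG: "?R \<in> G p" using xpow_G[OF r(3), of i] dg by (simp add: add.commute)
    obtain m' where m': "m' \<in> G p" "x * ?R = Top w m'" using Suc.IH[OF RF RG] by blast
    let ?u = "x ^ i * y ^ j"
    have "Top w ?u = ?u * x - emb w * (x * ?u)" unfolding Top_def by (simp only: mult.assoc)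
    also have "?u * x = x * (?u + ?R)"
      by (simp only: mult.assoc r(1)) (simp only: mult.assoc[symmetric] xpow_comm distrib_left)
    finally have "Top w ?u = emb (1 - w) * (x * ?u) + x * ?R"
      by (simp add: algebra_simps)
    then have "emb (1 - w) * (x * ?u) = Top w (?u - m')"
      by (simp add: Top_diff m'(2))
    then have "emb (inverse (1 - w)) * (emb (1 - w) * (x * ?u)) = Top w (emb (inverse (1 - w)) * (?u - m'))"
      by (simp add: Top_scale)
    moreover have "emb (inverse (1 - w)) * (emb (1 - w) * (x * ?u)) = x * ?u"
      using w by (intro emb_inv_cancel) simp
    ultimately have xu: "x * ?u = Top w (emb (inverse (1 - w)) * (?u - m'))" by simp
    let ?m = "emb (coef v i j) * (emb (inverse (1 - w)) * (?u - m'))"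
    have "x * (emb (coef v i j) * x ^ i * y ^ j) = emb (coef v i j) * (x * ?u)"
      by (simp only: emb_left mult.assoc)
    also have "\<dots> = Top w ?m" by (simp only: xu Top_scale)
    finally have "x * (emb (coef v i j) * x ^ i * y ^ j) = Top w ?m" .
    moreover have "?m \<in> G p"
      by (intro G_scale G_diff m'(1) G_mono) (use dg in simp)
    ultimately show ?case by blast
  qed
qed

lemma range_all: assumes w: "w \<noteq> 1" shows "\<exists>m. x * v = Top w m"
proof (induction v rule: supp_induct)
  case 1 show ?case by (intro exI[of _ 0]) (simp add: Top_zero)
next
  case (2 a b)
  then obtain ma mb where "x * a = Top w ma" "x * b = Top w mb" by blast
  then show ?case by (intro exI[of _ "ma + mb"]) (simp add: Top_add distrib_left)
next
  case (3 i j)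
  have "emb (coef v i j) * x ^ i * y ^ j \<in> F (Suc j)" by (rule F_smono) simp
  moreover have "emb (coef v i j) * x ^ i * y ^ j \<in> G (int i + int (N - 1) * int j)"
    by (rule G_smono) simp
  ultimately show ?case using range_graded[OF w] by blast
qed

definition y0 :: "'a \<Rightarrow> 'a" where
  "y0 a = (\<Sum>j\<in>{j. coef a 0 j \<noteq> 0}. emb (coef a 0 j) * y ^ j)"

lemma coef_y0: "coef (y0 a) = (\<lambda>i j. if i = 0 then coef a 0 j else 0)"
  unfolding y0_def by (rule y0_decomp_coef)

lemma y0_fin: "finite {j. coef a 0 j \<noteq> 0}"
proof (rule finite_subset)
  show "{j. coef a 0 j \<noteq> 0} \<subseteq> snd ` supp a" by (force simp: supp_def)
  show "finite (snd ` supp a)" using finite_supp by simp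
qed

lemma col0_x: assumes "\<forall>j. coef u 0 j = 0" shows "\<exists>v. u = x * v"
proof (induction u rule: supp_induct)
  case 1 show ?case by (intro exI[of _ 0]) simp
next
  case (2 a b)
  then obtain va vb where "a = x * va" "b = x * vb" by blast
  then show ?case by (intro exI[of _ "va + vb"]) (simp add: distrib_left)
next
  case (3 i j)
  have "i \<noteq> 0"
  proof
    assume "i = 0" with 3 assms show False by simp
  qed
  then obtain i' where i: "i = Suc i'" by (cases i) auto
  show ?case unfolding i x_mono[symmetric] by blast
qed

lemma decomp: "\<exists>v. a = x * v + y0 a"
proof -
  have "\<forall>j. coef (a - y0 a) 0 j = 0" by (simp add: coef_diff coef_y0)
  then obtain v where "a - y0 a = x * v" using col0_x by blast
  then show ?thesis by (intro exI[of _ v]) (simp add: algebra_simps)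
qed

lemma y0_xA: assumes "y0 a = x * v" shows "y0 a = 0"
proof -
  have "\<And>j. coef a 0 j = 0"
  proof -
    fix j
    have "coef (y0 a) 0 j = coef (x * v) 0 j" using assms by simp
    then show "coef a 0 j = 0" by (simp add: coef_y0 coef_x)
  qed
  then show ?thesis unfolding zero_iff coef_y0 by simp
qed

lemma y_y0_comm: "y * y0 a = y0 a * y"
  unfolding y0_def sum_distrib_left sum_distrib_right
  by (rule sum.cong) (simp_all add: emb_left mult.assoc power_commutes)

lemma coef_y_y0: "coef (y * y0 a) 0 (Suc j) = coef a 0 j"
proof -
  let ?J = "{j. coef a 0 j \<noteq> 0}"
  have e: "y * y0 a = (\<Sum>t\<in>?J. emb (coef a 0 t) * x ^ 0 * y ^ Suc t)"
    unfolding y0_def sum_distrib_left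
    by (rule sum.cong) (simp_all add: emb_left mult.assoc)
  have "coef (y * y0 a) 0 (Suc j) = (\<Sum>t\<in>?J. if j = t then coef a 0 t else 0)"
    unfolding e coef_sum[OF y0_fin] coef_smono by (simp add: eq_commute[of t j for t])
  also have "\<dots> = (if j \<in> ?J then coef a 0 j else 0)" using y0_fin by (rule sum.delta')
  also have "\<dots> = coef a 0 j" by auto
  finally show ?thesis .
qed

lemma y_y0_xA: assumes "c \<noteq> 0" "emb c * (y * y0 a) = x * v" shows "y0 a = 0"
proof -
  have "\<And>j. coef a 0 j = 0"
  proof -
    fix j
    have "coef (emb c * (y * y0 a)) 0 (Suc j) = coef (x * v) 0 (Suc j)" using assms by simp
    then have "c * coef a 0 j = 0" by (simp add: coef_scale coef_y_y0 coef_x)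
    then show "coef a 0 j = 0" using assms(1) by simp
  qed
  then show ?thesis unfolding zero_iff coef_y0 by simp
qed

lemma y0_single:
  assumes "N \<ge> 2" "a \<in> G q" "int (N - 1) * int k = q"
  shows "y0 a = emb (coef a 0 k) * y ^ k"
proof -
  let ?J = "{j. coef a 0 j \<noteq> 0}"
  have sub: "?J \<subseteq> {k}"
  proof
    fix j assume "j \<in> ?J"
    then have "int 0 + int (N - 1) * int j = q" using G_deg[OF assms(2), of 0 j] by simp
    then have "int (N - 1) * int j = int (N - 1) * int k" using assms(3) by simp
    moreover have "int (N - 1) \<noteq> 0" using assms(1) by simp
    ultimately show "j \<in> {k}" by simp
  qed
  show ?thesis
  proof (cases "k \<in> ?J")
    case True
    then have "?J = {k}" using sub by blast
    then show ?thesis unfolding y0_def by simp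
  next
    case False
    then have "?J = {}" using sub by blast
    then show ?thesis unfolding y0_def using False by simp
  qed
qed

end


locale P73 = AN emb N x y for emb :: "'k::field \<Rightarrow> 'a::ring_1" and N x y +
  fixes \<omega> :: 'k and \<phi> :: "'a \<Rightarrow> 'a"
  assumes w0: "\<omega> \<noteq> 0" and w1: "\<omega> \<noteq> 1" and aut: "k_alg_aut emb \<phi>"
    and phx: "\<phi> x = emb \<omega> * x" and phy: "\<phi> y = emb (\<omega> ^ (N - 1)) * y"
begin

lemma phi_add: "\<phi> (u + v) = \<phi> u + \<phi> v"
  using aut unfolding k_alg_aut_def k_linear_def by blast
lemma phi_mult: "\<phi> (u * v) = \<phi> u * \<phi> v"
  using aut unfolding k_alg_aut_def by blast
lemma phi_one: "\<phi> 1 = 1"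
  using aut unfolding k_alg_aut_def by blast
lemma phi_scale: "\<phi> (emb c * u) = emb c * \<phi> u"
  using aut unfolding k_alg_aut_def k_linear_def by blast
lemma phi_emb: "\<phi> (emb c) = emb c"
  using phi_scale[of c 1] phi_one by simp
lemma phi_zero: "\<phi> 0 = 0"
  using phi_scale[of 0 0] by simp
lemma phi_diff: "\<phi> (u - v) = \<phi> u - \<phi> v"
proof -
  have "\<phi> (u - v) + \<phi> v = \<phi> u" by (simp only: phi_add[symmetric]) simp
  then show ?thesis by (simp add: eq_diff_eq)
qed
lemma phi_pow: "\<phi> (u ^ n) = \<phi> u ^ n"
  by (induction n) (simp_all add: phi_one phi_mult)

definition dm :: "'a \<Rightarrow> 'a \<Rightarrow> 'a" where "dm m = (\<lambda>u. m * u - \<phi> u * m)"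

lemma dm_twisted: "twisted_der emb \<phi> (dm m)"
  unfolding twisted_der_def k_linear_def dm_def
  by (simp add: phi_add phi_mult phi_emb algebra_simps emb_left)

lemma dm_x: "dm m x = Top \<omega> m"
  unfolding dm_def Top_def phx ..

lemma dm_inner: "inner_twisted \<phi> (dm m)"
  unfolding inner_twisted_def dm_def by blast

context
  fixes g assumes g: "twisted_der emb \<phi> g"
begin
lemma td_add: "g (u + v) = g u + g v" using g unfolding twisted_der_def k_linear_def by blast
lemma td_scale: "g (emb c * u) = emb c * g u" using g unfolding twisted_der_def k_linear_def by blast
lemma td_mult: "g (u * v) = g u * v + \<phi> u * g v" using g unfolding twisted_der_def by blast
lemma td_zero: "g 0 = 0" using td_scale[of 0 0] by simp
lemma td_one: "g 1 = 0"
proof -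
  have "g (1 * 1) = g 1 * 1 + \<phi> 1 * g 1" by (rule td_mult)
  then show ?thesis by (simp add: phi_one)
qed
lemma td_rel: "Top \<omega> (g y) = g x * y - \<phi> y * g x + g (x ^ N)"
proof -
  have "g (y * x) = g (x * y) + g (x ^ N)" by (simp only: rel' td_add)
  then have "g y * x + \<phi> y * g x = g x * y + emb \<omega> * x * g y + g (x ^ N)"
    by (simp only: td_mult phx)
  then show ?thesis unfolding Top_def by (simp add: algebra_simps)
qed
lemma td_xN: assumes "N \<ge> 2" shows "\<exists>v. g (x ^ N) = x * v"
proof -
  have e1: "x ^ N = x * x ^ (N - 1)" by (rule xN)
  have e2: "x ^ (N - 1) = x ^ (N - 2) * x" using assms
    by (metis Suc_diff_Suc Suc_1 Suc_le_lessD diff_Suc_eq_diff_pred power_Suc2)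
  obtain v where v: "g x * x ^ (N - 2) * x = x * v" using normal by blast
  have "g (x ^ N) = g x * x ^ (N - 1) + emb \<omega> * x * g (x ^ (N - 1))"
    by (simp only: e1 td_mult phx)
  also have "\<dots> = x * (v + emb \<omega> * g (x ^ (N - 1)))"
    by (simp only: e2 mult.assoc[symmetric] v distrib_left) (simp only: emb_central[of \<omega> x] mult.assoc)
  finally show ?thesis by blast
qed
lemma td_vanish: assumes "g x = 0" "g y = 0" shows "g u = 0"
proof -
  have gx: "g (x ^ i) = 0" for i
    by (induction i) (simp_all add: td_mult assms td_one)
  have gy: "g (y ^ j) = 0" for j
    by (induction j) (simp_all add: td_mult assms td_one)
  show ?thesis
  proof (induction u rule: supp_induct)
    case 1 show ?case by (rule td_zero)
  next
    case (2 a b) then show ?case by (simp add: td_add)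
  next
    case (3 i j)
    have "g (emb (coef u i j) * x ^ i * y ^ j) = emb (coef u i j) * g (x ^ i * y ^ j)"
      by (simp only: mult.assoc td_scale)
    then show ?case by (simp add: td_mult gx gy)
  qed
qed
lemma td_x0: assumes "g x = 0" shows "g u = 0"
proof -
  have gxN: "g (x ^ n) = 0" for n
    by (induction n) (simp_all add: td_mult assms td_one)
  have "Top \<omega> (g y) = 0" using td_rel by (simp add: assms gxN)
  then have "g y = 0" using Top_inj w1 by blast
  then show ?thesis using td_vanish assms by blast
qed
end

lemma td_minus: assumes G: "twisted_der emb \<phi> g" and H: "twisted_der emb \<phi> h"
  shows "twisted_der emb \<phi> (\<lambda>u. g u - h u)"
  unfolding twisted_der_def k_linear_def
proof (intro conjI allI)
  fix u v
  show "g (u + v) - h (u + v) = g u - h u + (g v - h v)"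
    by (simp only: td_add[OF G] td_add[OF H]) (simp add: algebra_simps)
  show "g (u * v) - h (u * v) = (g u - h u) * v + \<phi> u * (g v - h v)"
    by (simp only: td_mult[OF G] td_mult[OF H]) (simp add: algebra_simps)
next
  fix c u
  show "g (emb c * u) - h (emb c * u) = emb c * (g u - h u)"
    by (simp only: td_scale[OF G] td_scale[OF H]) (simp add: algebra_simps)
qed

lemma td_smult: assumes G: "twisted_der emb \<phi> g" shows "twisted_der emb \<phi> (\<lambda>u. emb c * g u)"
  unfolding twisted_der_def k_linear_def
proof (intro conjI allI)
  fix u v
  show "emb c * g (u + v) = emb c * g u + emb c * g v"
    by (simp only: td_add[OF G]) (simp add: algebra_simps)
  show "emb c * g (u * v) = emb c * g u * v + \<phi> u * (emb c * g v)"
    by (simp only: td_mult[OF G] distrib_left mult.assoc emb_left[of "\<phi> u" c "g v"])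
next
  fix a u
  show "emb c * g (emb a * u) = emb a * (emb c * g u)"
    by (simp only: td_scale[OF G] emb_left[of "emb c" a "g u"])
qed

lemma key: assumes "twisted_der emb \<phi> g" "g x = Top \<omega> m" shows "inner_twisted \<phi> g"
proof -
  let ?h = "\<lambda>u. g u - dm m u"
  have h: "twisted_der emb \<phi> ?h" using td_minus[OF assms(1) dm_twisted] .
  have "?h x = 0" using assms(2) dm_x by simp
  then have h0: "\<And>u. ?h u = 0" using td_x0[OF h] by blast
  have "\<forall>u. g u = m * u - \<phi> u * m"
  proof
    fix u from h0[of u] have "g u = dm m u" by (simp only: right_minus_eq)
    then show "g u = m * u - \<phi> u * m" by (simp only: dm_def)
  qed
  then show ?thesis unfolding inner_twisted_def by (rule exI)
qed

lemma twisted_decomp: assumes "twisted_der emb \<phi> g"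
  shows "\<exists>m. g x = Top \<omega> m + y0 (g x)"
proof -
  obtain v where v: "g x = x * v + y0 (g x)" using decomp by blast
  obtain m where "x * v = Top \<omega> m" using range_all[OF w1] by blast
  then show ?thesis using v by auto
qed

lemma case_N1: assumes "N = 1" "twisted_der emb \<phi> g" shows "inner_twisted \<phi> g"
proof -
  obtain m where m: "g x = Top \<omega> m + y0 (g x)" using twisted_decomp[OF assms(2)] by blast
  let ?h = "\<lambda>u. g u - dm m u"
  have h: "twisted_der emb \<phi> ?h" using td_minus[OF assms(2) dm_twisted] .
  have hx: "?h x = y0 (g x)"
  proof -
    have "?h x = g x - Top \<omega> m" by (simp only: dm_x)
    then show ?thesis using m by (metis add_diff_cancel_left')
  qed
  have "Top \<omega> (?h y) = ?h x * y - \<phi> y * ?h x + ?h (x ^ N)" by (rule td_rel[OF h])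
  also have "\<dots> = y0 (g x)" using assms(1) phy y_y0_comm[of "g x"] hx by simp
  finally have "y0 (g x) = Top \<omega> (?h y)" ..
  then have "y0 (g x) = 0" using Top_x y0_xA by metis
  then show ?thesis using key[OF assms(2)] m by simp
qed

lemma case_gen: assumes "N \<ge> 2" "\<omega> ^ (N - 1) \<noteq> 1" "twisted_der emb \<phi> g" shows "inner_twisted \<phi> g"
proof -
  obtain m where m: "g x = Top \<omega> m + y0 (g x)" using twisted_decomp[OF assms(3)] by blast
  let ?h = "\<lambda>u. g u - dm m u"
  let ?a = "y0 (g x)"
  have h: "twisted_der emb \<phi> ?h" using td_minus[OF assms(3) dm_twisted] .
  have hx: "?h x = ?a"
  proof -
    have "?h x = g x - Top \<omega> m" by (simp only: dm_x)
    then show ?thesis using m by (metis add_diff_cancel_left')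
  qed
  obtain v1 where v1: "Top \<omega> (?h y) = x * v1" using Top_x by blast
  obtain v2 where v2: "?h (x ^ N) = x * v2" using td_xN[OF h assms(1)] by blast
  have "x * v1 = ?a * y - \<phi> y * ?a + x * v2" using td_rel[OF h] v1 v2 hx by simp
  also have "?a * y - \<phi> y * ?a = emb (1 - \<omega> ^ (N - 1)) * (y * ?a)"
    unfolding phy y_y0_comm[symmetric] by (simp add: algebra_simps mult.assoc)
  finally have "emb (1 - \<omega> ^ (N - 1)) * (y * ?a) = x * (v1 - v2)"
    by (simp add: algebra_simps)
  moreover have "1 - \<omega> ^ (N - 1) \<noteq> 0" using assms(2) by simp
  ultimately have "?a = 0" using y_y0_xA by blast
  then show ?thesis using key[OF assms(3)] m by simp
qed

end


locale KA = fixes E :: "'k::field \<Rightarrow> 'b::ring_1" assumes ka: "is_k_algebra E"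
begin
lemma E1[simp]: "E 1 = 1" using ka unfolding is_k_algebra_def by blast
lemma E_add[simp]: "E (a + b) = E a + E b" using ka unfolding is_k_algebra_def by blast
lemma E_mult[simp]: "E (a * b) = E a * E b" using ka unfolding is_k_algebra_def by blast
lemma E_central: "E c * u = u * E c" using ka unfolding is_k_algebra_def by blast
lemma E0[simp]: "E 0 = 0"
proof -
  have "E 0 = E 0 + E 0" by (simp only: E_add[symmetric]) simp
  then show ?thesis by simp
qed
lemma E_of_nat: "E (of_nat n) = of_nat n"
  by (induction n) simp_all
lemma E_left: "u * (E a * v) = E a * (u * v)"
proof -
  have "u * (E a * v) = (u * E a) * v" by (simp only: mult.assoc)
  also have "\<dots> = (E a * u) * v" by (simp only: E_central[of a u])
  finally show ?thesis by (simp only: mult.assoc)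
qed
end

context AN
begin

definition U :: "('k \<Rightarrow> 'b::ring_1) \<Rightarrow> 'b \<Rightarrow> 'b \<Rightarrow> 'a \<Rightarrow> 'b" where
  "U E X Y u = (\<Sum>(i,j)\<in>supp u. E (coef u i j) * X ^ i * Y ^ j)"

context
  fixes E :: "'k \<Rightarrow> 'b::ring_1" and X Y :: 'b
  assumes EK: "KA E" and XY: "Y * X - X * Y = X ^ N"
begin

interpretation KA E by (rule EK)

lemma U_sup: assumes "finite S" "supp u \<subseteq> S"
  shows "U E X Y u = (\<Sum>(i,j)\<in>S. E (coef u i j) * X ^ i * Y ^ j)"
  unfolding U_def
  by (rule sum.mono_neutral_left) (use assms in \<open>auto simp: supp_def\<close>)

lemma U_add: "U E X Y (u + v) = U E X Y u + U E X Y v"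
proof -
  let ?S = "supp u \<union> supp v"
  have fin: "finite ?S" using finite_supp by simp
  have "supp (u + v) \<subseteq> ?S" by (auto simp: supp_def coef_add)
  then have "U E X Y (u + v) = (\<Sum>(i,j)\<in>?S. E (coef (u + v) i j) * X ^ i * Y ^ j)"
    using U_sup fin by blast
  also have "\<dots> = (\<Sum>(i,j)\<in>?S. E (coef u i j) * X ^ i * Y ^ j) + (\<Sum>(i,j)\<in>?S. E (coef v i j) * X ^ i * Y ^ j)"
    by (simp add: coef_add sum.distrib[symmetric] case_prod_beta' algebra_simps)
  also have "\<dots> = U E X Y u + U E X Y v"
    using U_sup[of ?S u] U_sup[of ?S v] fin by auto
  finally show ?thesis .
qed

lemma U_scale: "U E X Y (emb a * u) = E a * U E X Y u"
proof -
  have fin: "finite (supp u)" using finite_supp .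
  have "supp (emb a * u) \<subseteq> supp u" by (auto simp: supp_def coef_scale)
  then have "U E X Y (emb a * u) = (\<Sum>(i,j)\<in>supp u. E (coef (emb a * u) i j) * X ^ i * Y ^ j)"
    using U_sup fin by blast
  also have "\<dots> = E a * U E X Y u"
    unfolding U_def by (simp add: coef_scale sum_distrib_left case_prod_beta' mult.assoc)
  finally show ?thesis .
qed

lemma U_zero: "U E X Y 0 = 0"
  using U_scale[of 0 0] by simp

lemma U_smono: "U E X Y (emb a * x ^ i * y ^ j) = E a * X ^ i * Y ^ j"
proof -
  have "supp (emb a * x ^ i * y ^ j) \<subseteq> {(i,j)}" by (auto simp: supp_def coef_smono split: if_splits)
  then have "U E X Y (emb a * x ^ i * y ^ j) = (\<Sum>(i',j')\<in>{(i,j)}. E (coef (emb a * x ^ i * y ^ j) i' j') * X ^ i' * Y ^ j')"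
    by (intro U_sup) auto
  then show ?thesis by (simp add: coef_smono)
qed

lemma U_x: "U E X Y (x * u) = X * U E X Y u"
proof (induction u rule: supp_induct)
  case 1 then show ?case by (simp add: U_zero)
next
  case (2 a b) then show ?case by (simp add: distrib_left U_add)
next
  case (3 i j)
  show ?case unfolding x_mono U_smono
    by (simp only: E_left mult.assoc power_Suc)
qed

lemma YXi: "Y * X ^ i = X ^ i * Y + of_nat i * X ^ (i + N - 1)"
  by (rule yXpow[OF XY N1])

lemma U_y: "U E X Y (y * u) = Y * U E X Y u"
proof (induction u rule: supp_induct)
  case 1 then show ?case by (simp add: U_zero)
next
  case (2 a b) then show ?case by (simp add: distrib_left U_add)
next
  case (3 i j)
  let ?c = "coef u i j"
  have "U E X Y (y * (emb ?c * x ^ i * y ^ j)) = E ?c * X ^ i * Y ^ Suc j + E (?c * of_nat i) * X ^ (i + N - 1) * Y ^ j"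
    unfolding y_mono U_add U_smono ..
  also have "\<dots> = E ?c * ((X ^ i * Y + of_nat i * X ^ (i + N - 1)) * Y ^ j)"
    by (simp only: E_mult E_of_nat power_Suc distrib_right distrib_left mult.assoc)
  also have "\<dots> = Y * (E ?c * X ^ i * Y ^ j)"
    by (simp only: YXi[symmetric] E_left mult.assoc)
  finally show ?case unfolding U_smono .
qed

lemma U_xpow: "U E X Y (x ^ i * u) = X ^ i * U E X Y u"
  by (induction i arbitrary: u) (simp_all add: mult.assoc U_x)
lemma U_ypow: "U E X Y (y ^ i * u) = Y ^ i * U E X Y u"
  by (induction i arbitrary: u) (simp_all add: mult.assoc U_y)

lemma U_mult: "U E X Y (u * v) = U E X Y u * U E X Y v"
proof (induction u rule: supp_induct)
  case 1 then show ?case by (simp add: U_zero)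
next
  case (2 a b) then show ?case by (simp add: distrib_right U_add)
next
  case (3 i j)
  let ?c = "coef u i j"
  have "U E X Y (emb ?c * x ^ i * y ^ j * v) = E ?c * (X ^ i * (Y ^ j * U E X Y v))"
    by (simp only: mult.assoc U_scale U_xpow U_ypow)
  also have "\<dots> = U E X Y (emb ?c * x ^ i * y ^ j) * U E X Y v"
    unfolding U_smono by (simp only: mult.assoc)
  finally show ?case .
qed

lemma U_one: "U E X Y 1 = 1"
  using U_smono[of 1 0 0] by simp
lemma U_xx: "U E X Y x = X"
  using U_smono[of 1 1 0] by simp
lemma U_yy: "U E X Y y = Y"
  using U_smono[of 1 0 1] by simp

end
end



primrec Dn :: "'a::ring_1 \<Rightarrow> 'a \<Rightarrow> 'a \<Rightarrow> nat \<Rightarrow> 'a" where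
  "Dn px a xx 0 = 0"
| "Dn px a xx (Suc n) = px * Dn px a xx n + a * xx ^ n"

lemma t1_add: "t1 (A + B) = t1 A + t1 B" by (simp add: plus_tri_def)
lemma t2_add: "t2 (A + B) = t2 A + t2 B" by (simp add: plus_tri_def)
lemma t3_add: "t3 (A + B) = t3 A + t3 B" by (simp add: plus_tri_def)
lemma t1_mult: "t1 (A * B) = t1 A * t1 B" by (simp add: times_tri_def)
lemma t2_mult: "t2 (A * B) = t1 A * t2 B + t2 A * t3 B" by (simp add: times_tri_def)
lemma t3_mult: "t3 (A * B) = t3 A * t3 B" by (simp add: times_tri_def)
lemma t1_pow: "t1 (A ^ n) = t1 A ^ n" by (induction n) (simp_all add: t1_mult one_tri_def)
lemma t3_pow: "t3 (A ^ n) = t3 A ^ n" by (induction n) (simp_all add: t3_mult one_tri_def)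
lemma t_zero: "t1 0 = 0" "t2 0 = 0" "t3 0 = 0" by (simp_all add: zero_tri_def)

context P73
begin

lemma graded_eq: "graded_piece emb N x y p = G p"
proof
  show "graded_piece emb N x y p \<subseteq> G p"
  proof
    fix u assume "u \<in> graded_piece emb N x y p"
    then obtain S c where S: "finite S" "\<forall>(i,j)\<in>S. int i + int (N - 1) * int j = p"
      "u = mc S c" unfolding graded_piece_def by blast
    have "coef u = (\<lambda>i j. if (i,j) \<in> S then c i j else 0)" unfolding S(3) by (rule coef_mc[OF S(1)])
    then show "u \<in> G p" unfolding G_def using S(2) by (auto split: if_splits)
  qed
next
  show "G p \<subseteq> graded_piece emb N x y p"
  proof
    fix u assume u: "u \<in> G p"
    have "\<forall>(i,j)\<in>supp u. int i + int (N - 1) * int j = p"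
      using G_deg[OF u] by (auto simp: supp_def)
    then have "finite (supp u) \<and> (\<forall>(i,j)\<in>supp u. int i + int (N - 1) * int j = p) \<and> u = mc (supp u) (coef u)"
      using finite_supp expand[of u] by (intro conjI)
    then show "u \<in> graded_piece emb N x y p"
      unfolding graded_piece_def mem_Collect_eq by (intro exI)
  qed
qed

lemma hom_der_iff: "d \<in> hom_der emb N x y \<phi> l \<longleftrightarrow>
    twisted_der emb \<phi> d \<and> (\<forall>p. \<forall>u\<in>G p. d u \<in> G (p + l))"
  unfolding hom_der_def graded_eq by simp

lemma pow_G: "u \<in> G p \<Longrightarrow> u ^ i \<in> G (int i * p)"
proof (induction i)
  case 0 show ?case using G_mono[of 0 0 0] by simp
next
  case (Suc i)
  have "u * u ^ i \<in> G (p + int i * p)" using G_mult[OF Suc.prems Suc.IH[OF Suc.prems]] .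
  then show ?case by (simp add: algebra_simps)
qed

lemma hom_ok:
  assumes g: "twisted_der emb \<phi> g" and gx: "g x \<in> G (1 + l)" and gy: "g y \<in> G (int (N - 1) + l)"
  shows "u \<in> G p \<Longrightarrow> g u \<in> G (p + l)"
proof -
  have xG: "x \<in> G 1" using G_mono[of 1 1 0] by simp
  have yG: "y \<in> G (int (N - 1))" using G_mono[of "int (N - 1)" 0 1] by simp
  have gxi: "g (x ^ i) \<in> G (int i + l)" for i
  proof (induction i)
    case 0 show ?case by (simp add: td_one[OF g] G_zero)
  next
    case (Suc i)
    have "g (x ^ Suc i) = g x * x ^ i + emb \<omega> * (x * g (x ^ i))"
      by (simp only: power_Suc td_mult[OF g] phx mult.assoc)
    moreover have "g x * x ^ i \<in> G (1 + l + int i * 1)" using G_mult[OF gx pow_G[OF xG]] .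
    moreover have "emb \<omega> * (x * g (x ^ i)) \<in> G (int i + l + 1)" using G_scale[OF x_G[OF Suc.IH]] .
    ultimately show ?case by (simp add: G_add algebra_simps)
  qed
  have gyj: "g (y ^ j) \<in> G (int (N - 1) * int j + l)" for j
  proof (induction j)
    case 0 show ?case by (simp add: td_one[OF g] G_zero)
  next
    case (Suc j)
    have "g (y ^ Suc j) = g y * y ^ j + emb (\<omega> ^ (N - 1)) * (y * g (y ^ j))"
      by (simp only: power_Suc td_mult[OF g] phy mult.assoc)
    moreover have "g y * y ^ j \<in> G (int (N - 1) + l + int j * int (N - 1))"
      using G_mult[OF gy pow_G[OF yG]] .
    moreover have "emb (\<omega> ^ (N - 1)) * (y * g (y ^ j)) \<in> G (int (N - 1) * int j + l + int (N - 1))"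
      using G_scale[OF y_G[OF Suc.IH]] .
    ultimately show ?case by (simp add: G_add algebra_simps)
  qed
  assume u: "u \<in> G p"
  show "g u \<in> G (p + l)"
  proof (induction u rule: supp_induct)
    case 1 show ?case by (simp add: td_zero[OF g] G_zero)
  next
    case (2 a b) then show ?case by (simp add: td_add[OF g] G_add)
  next
    case (3 i j)
    have d: "int i + int (N - 1) * int j = p" using G_deg[OF u 3] .
    have phxi: "\<phi> (x ^ i) \<in> G (int i * 1)" unfolding phi_pow phx
      using pow_G[OF G_scale[OF xG]] .
    have "g (emb (coef u i j) * x ^ i * y ^ j) = emb (coef u i j) * (g (x ^ i) * y ^ j + \<phi> (x ^ i) * g (y ^ j))"
      by (simp only: mult.assoc td_scale[OF g]) (simp only: td_mult[OF g])
    moreover have "g (x ^ i) * y ^ j \<in> G (int i + l + int j * int (N - 1))"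
      using G_mult[OF gxi pow_G[OF yG]] .
    moreover have "\<phi> (x ^ i) * g (y ^ j) \<in> G (int i * 1 + (int (N - 1) * int j + l))"
      using G_mult[OF phxi gyj] .
    ultimately show ?case using d by (simp add: G_add G_scale algebra_simps)
  qed
qed

lemma exists_der:
  assumes r: "Top \<omega> b + \<phi> y * a - a * y = Dn (\<phi> x) a x N"
  shows "\<exists>D. twisted_der emb \<phi> D \<and> D x = a \<and> D y = b"
proof -
  define E where "E = (\<lambda>c. Tri (emb c) 0 (emb c))"
  define X where "X = Tri (\<phi> x) a x"
  define Y where "Y = Tri (\<phi> y) b y"
  have EK: "KA E"
    unfolding KA_def is_k_algebra_def E_def
  proof (intro conjI allI)
    show "Tri (emb 1) 0 (emb 1) = 1" by (simp add: one_tri_def)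
    fix c u :: 'k
    show "Tri (emb (c + u)) 0 (emb (c + u)) = Tri (emb c) 0 (emb c) + Tri (emb u) 0 (emb u)" by simp
    show "Tri (emb (c * u)) 0 (emb (c * u)) = Tri (emb c) 0 (emb c) * Tri (emb u) 0 (emb u)" by simp
  next
    fix c :: 'k and u :: "'a tri"
    show "Tri (emb c) 0 (emb c) * u = u * Tri (emb c) 0 (emb c)"
      by (cases u) (simp add: emb_central)
  qed
  have Xpow: "X ^ n = Tri (\<phi> x ^ n) (Dn (\<phi> x) a x n) (x ^ n)" for n
    by (induction n) (simp_all add: X_def one_tri_def)
  have XY: "Y * X - X * Y = X ^ N"
  proof -
    have "\<phi> y * \<phi> x - \<phi> x * \<phi> y = \<phi> x ^ N"
      using rel by (metis phi_diff phi_mult phi_pow)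
    moreover have "\<phi> y * a + b * x - (\<phi> x * b + a * y) = Dn (\<phi> x) a x N"
      using r unfolding Top_def phx by (simp add: algebra_simps)
    ultimately show ?thesis unfolding Xpow unfolding X_def Y_def using rel by simp
  qed
  define D where "D = (\<lambda>u. t2 (U E X Y u))"
  have T1: "t1 (U E X Y u) = \<phi> u" for u
  proof (induction u rule: supp_induct)
    case 1 show ?case by (simp add: U_zero[OF EK XY] t_zero phi_zero)
  next
    case (2 a b) then show ?case by (simp add: U_add[OF EK XY] t1_add phi_add)
  next
    case (3 i j)
    have "t1 (E (coef u i j) * X ^ i * Y ^ j) = emb (coef u i j) * \<phi> x ^ i * \<phi> y ^ j"
      by (simp add: t1_mult t1_pow E_def X_def Y_def)
    moreover have "\<phi> (emb (coef u i j) * x ^ i * y ^ j) = emb (coef u i j) * \<phi> x ^ i * \<phi> y ^ j"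
      by (simp only: mult.assoc phi_scale) (simp only: phi_mult phi_pow)
    ultimately show ?case
      by (simp only: U_smono[OF EK XY])
  qed
  have T3: "t3 (U E X Y u) = u" for u
  proof (induction u rule: supp_induct)
    case 1 show ?case by (simp add: U_zero[OF EK XY] t_zero)
  next
    case (2 a b) then show ?case by (simp add: U_add[OF EK XY] t3_add)
  next
    case (3 i j)
    have "t3 (E (coef u i j) * X ^ i * Y ^ j) = emb (coef u i j) * x ^ i * y ^ j"
      by (simp add: t3_mult t3_pow E_def X_def Y_def)
    then show ?case
      by (simp only: U_smono[OF EK XY])
  qed
  have "twisted_der emb \<phi> D"
    unfolding twisted_der_def k_linear_def
  proof (intro conjI allI)
    fix u v
    show "D (u + v) = D u + D v" unfolding D_def by (simp only: U_add[OF EK XY] t2_add)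
    show "D (u * v) = D u * v + \<phi> u * D v"
      unfolding D_def by (simp only: U_mult[OF EK XY] t2_mult T1 T3 add.commute)
  next
    fix c u
    show "D (emb c * u) = emb c * D u"
      unfolding D_def U_scale[OF EK XY] t2_mult by (simp add: E_def)
  qed
  moreover have "D x = a" using U_xx[OF EK XY] unfolding D_def X_def by simp
  moreover have "D y = b" using U_yy[OF EK XY] unfolding D_def Y_def by simp
  ultimately show ?thesis by blast
qed

lemma Dn_G: "Dn (\<phi> x) (y ^ k) x (Suc n) \<in> G (int (N - 1) * int k + int n)"
proof (induction n)
  case 0 show ?case using G_mono[of _ 0 k] by simp
next
  case (Suc n)
  have "Dn (\<phi> x) (y ^ k) x (Suc (Suc n)) = emb \<omega> * (x * Dn (\<phi> x) (y ^ k) x (Suc n)) + y ^ k * x ^ Suc n"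
    by (simp only: Dn.simps(2)[of _ _ _ "Suc n"] phx mult.assoc)
  moreover have "emb \<omega> * (x * Dn (\<phi> x) (y ^ k) x (Suc n)) \<in> G (int (N - 1) * int k + int n + 1)"
    using G_scale[OF x_G[OF Suc.IH]] .
  moreover have "y ^ k * x ^ Suc n \<in> G (int (N - 1) * int k + int (Suc n))"
  proof -
    have h1: "y ^ k \<in> G (int (N - 1) * int k)" using G_mono[of "int (N - 1) * int k" 0 k] by simp
    have h2: "x ^ Suc n \<in> G (int (Suc n))" using G_mono[of "int (Suc n)" "Suc n" 0] by (simp only: power_0 mult_1_right)
    show ?thesis using G_mult[OF h1 h2] .
  qed
  ultimately show ?case by (simp add: G_add algebra_simps)
qed

lemma Dn_xA: assumes "N \<ge> 2" shows "\<exists>w. Dn (\<phi> x) a x N = x * w"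
proof -
  obtain n where n: "N = Suc (Suc n)" using assms by (metis add_2_eq_Suc le_Suc_ex)
  obtain v where v: "a * x ^ n * x = x * v" using normal by blast
  have "Dn (\<phi> x) a x N = x * (emb \<omega> * Dn (\<phi> x) a x (Suc n)) + a * x ^ n * x"
    unfolding n by (simp only: Dn.simps(2)[of _ _ _ "Suc n"] phx mult.assoc emb_left power_Suc2)
  also have "\<dots> = x * (emb \<omega> * Dn (\<phi> x) a x (Suc n) + v)" by (simp only: v distrib_left)
  finally show ?thesis by blast
qed

lemma x_G_inv: assumes "x * w \<in> G q" shows "w \<in> G (q - 1)"
  unfolding G_def mem_Collect_eq
proof (intro allI impI)
  fix i j assume "coef w i j \<noteq> 0"
  then have "coef (x * w) (Suc i) j \<noteq> 0" by (simp add: coef_x)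
  then have "int (Suc i) + int (N - 1) * int j = q" using G_deg[OF assms] by blast
  then show "int i + int (N - 1) * int j = q - 1" by simp
qed

lemma special_D:
  assumes N2: "N \<ge> 2" and w': "\<omega> ^ (N - 1) = 1" and k: "int (N - 1) * int k = l + 1"
  shows "\<exists>D. D \<in> hom_der emb N x y \<phi> l \<and> D x = y ^ k"
proof -
  obtain w where w: "Dn (\<phi> x) (y ^ k) x N = x * w" using Dn_xA[OF N2] by blast
  obtain n where n: "N = Suc n" using N2 by (cases N) auto
  have "x * w \<in> G (int (N - 1) * int k + int n)" using Dn_G[of k n] w n by simp
  then have "w \<in> G (int (N - 1) * int k + int n - 1)" by (rule x_G_inv)
  moreover have "int (N - 1) * int k + int n - 1 = int (N - 1) + l" using k n by simp
  ultimately have wG: "w \<in> G (int (N - 1) + l)" by simp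
  obtain nn where "w \<in> F nn" using F_ex by blast
  then obtain b where b: "b \<in> G (int (N - 1) + l)" "x * w = Top \<omega> b"
    using range_graded[OF w1 _ wG] by blast
  have "Top \<omega> b + \<phi> y * y ^ k - y ^ k * y = Dn (\<phi> x) (y ^ k) x N"
    unfolding phy w' w b(2) by (simp add: power_commutes)
  then obtain D where D: "twisted_der emb \<phi> D" "D x = y ^ k" "D y = b"
    using exists_der by blast
  have "D x \<in> G (1 + l)" unfolding D(2) using G_mono[of _ 0 k] k by (simp add: add.commute)
  moreover have "D y \<in> G (int (N - 1) + l)" unfolding D(3) by (rule b(1))
  ultimately have "D \<in> hom_der emb N x y \<phi> l"
    unfolding hom_der_iff using D(1) hom_ok by blast
  then show ?thesis using D(2) by blast
qed

end


context P73
begin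

lemma dim0:
  assumes "\<And>f. f \<in> hom_der emb N x y \<phi> l \<Longrightarrow> inner_twisted \<phi> f"
  shows "has_quot_dim emb (hom_der emb N x y \<phi> l) (hom_inner emb N x y \<phi> l) 0"
  unfolding has_quot_dim_def
proof (intro exI[of _ "[]"] conjI allI impI ballI)
  fix f assume f: "f \<in> hom_der emb N x y \<phi> l"
  have "(\<lambda>u. f u - (\<Sum>i<0. emb (undefined i) * ([] ! i) u)) = f" by simp
  then show "\<exists>c. (\<lambda>u. f u - (\<Sum>i<0. emb (c i) * ([] ! i) u)) \<in> hom_inner emb N x y \<phi> l"
    using f assms[OF f] unfolding hom_inner_def by (intro exI[of _ undefined]) simp
qed simp_all

lemma y0_zero: "(\<And>j. coef a 0 j = 0) \<Longrightarrow> y0 a = 0"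
  unfolding zero_iff coef_y0 by simp

lemma hom_x: "f \<in> hom_der emb N x y \<phi> l \<Longrightarrow> f x \<in> G (1 + l)"
  unfolding hom_der_iff using G_mono[of 1 1 0] by simp

lemma main_N2:
  assumes N2: "N \<ge> 2"
  shows "has_quot_dim emb (hom_der emb N x y \<phi> l) (hom_inner emb N x y \<phi> l)
           (if \<omega> ^ (N - 1) \<noteq> 1 then 0
            else if l \<ge> -1 \<and> int (N - 1) dvd (l + 1) then 1 else 0)"
proof (cases "\<omega> ^ (N - 1) \<noteq> 1")
  case True
  then show ?thesis using dim0 case_gen[OF N2 True] unfolding hom_der_iff by simp
next
  case False
  then have w': "\<omega> ^ (N - 1) = 1" by simp
  show ?thesis
  proof (cases "l \<ge> -1 \<and> int (N - 1) dvd (l + 1)")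
    case cond: False
    have "inner_twisted \<phi> f" if f: "f \<in> hom_der emb N x y \<phi> l" for f
    proof -
      have fx: "f x \<in> G (1 + l)" using hom_x[OF f] .
      have td: "twisted_der emb \<phi> f" using f unfolding hom_der_iff by blast
      have "coef (f x) 0 j = 0" for j
      proof (rule ccontr)
        assume "coef (f x) 0 j \<noteq> 0"
        then have "int 0 + int (N - 1) * int j = 1 + l" using G_deg[OF fx] by blast
        then have e: "l + 1 = int (N - 1) * int j" by simp
        moreover have "0 \<le> int (N - 1) * int j" by simp
        ultimately have "l \<ge> -1" by linarith
        moreover have "int (N - 1) dvd (l + 1)" unfolding e by simp
        ultimately have "l \<ge> -1 \<and> int (N - 1) dvd (l + 1)" by blast
        then show False using cond by blast
      qed
      then have "y0 (f x) = 0" by (rule y0_zero)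
      moreover obtain m where "f x = Top \<omega> m + y0 (f x)" using twisted_decomp[OF td] by blast
      ultimately have "f x = Top \<omega> m" by simp
      then show ?thesis by (rule key[OF td])
    qed
    then have H: "has_quot_dim emb (hom_der emb N x y \<phi> l) (hom_inner emb N x y \<phi> l) 0"
      by (rule dim0)
    have "(if \<omega> ^ (N - 1) \<noteq> 1 then 0 else if l \<ge> -1 \<and> int (N - 1) dvd (l + 1) then 1 else 0) = (0::nat)"
      using w' cond by (simp only: if_False if_not_P not_not)
    then show ?thesis using H by simp
  next
    case cond: True
    define k where "k = nat ((l + 1) div int (N - 1))"
    have k: "int (N - 1) * int k = l + 1"
    proof -
      obtain q where q: "l + 1 = int (N - 1) * q" using cond by (auto simp: dvd_def)
      have pos: "int (N - 1) > 0" using N2 by simp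
      have "q \<ge> 0"
      proof (rule ccontr)
        assume "\<not> q \<ge> 0"
        then have "int (N - 1) * q < 0" using pos by (simp add: mult_pos_neg)
        then show False using q cond by linarith
      qed
      moreover have "(l + 1) div int (N - 1) = q" using q pos by simp
      ultimately show ?thesis unfolding k_def using q by simp
    qed
    obtain D where D: "D \<in> hom_der emb N x y \<phi> l" "D x = y ^ k"
      using special_D[OF N2 w' k] by blast
    have Dtd: "twisted_der emb \<phi> D" using D(1) unfolding hom_der_iff by blast
    have "has_quot_dim emb (hom_der emb N x y \<phi> l) (hom_inner emb N x y \<phi> l) 1"
      unfolding has_quot_dim_def
    proof (intro exI[of _ "[D]"] conjI allI impI ballI)
      show "length [D] = 1" by simp
      show "set [D] \<subseteq> hom_der emb N x y \<phi> l" using D(1) by simp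
    next
      fix c :: "nat \<Rightarrow> 'k" and i :: nat
      assume W: "(\<lambda>u. \<Sum>i<1. emb (c i) * ([D] ! i) u) \<in> hom_inner emb N x y \<phi> l" and i: "i < 1"
      then obtain m where m: "\<forall>u. (\<Sum>i<1. emb (c i) * ([D] ! i) u) = m * u - \<phi> u * m"
        unfolding hom_inner_def inner_twisted_def by blast
      have "emb (c 0) * y ^ k = Top \<omega> m" using m[rule_format, of x] D(2)
        unfolding Top_def phx by simp
      moreover obtain v where "Top \<omega> m = x * v" using Top_x by blast
      ultimately have "coef (emb (c 0) * x ^ 0 * y ^ k) 0 k = coef (x * v) 0 k" by simp
      then have "c 0 = 0" unfolding coef_smono coef_x by simp
      then show "c i = 0" using i by simp
    next
      fix f assume f: "f \<in> hom_der emb N x y \<phi> l"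
      have fx: "f x \<in> G (1 + l)" using hom_x[OF f] .
      have td: "twisted_der emb \<phi> f" using f unfolding hom_der_iff by blast
      obtain m where m: "f x = Top \<omega> m + y0 (f x)" using twisted_decomp[OF td] by blast
      let ?c = "coef (f x) 0 k"
      have "y0 (f x) = emb ?c * y ^ k" using y0_single[OF N2 fx] k by simp
      let ?h = "\<lambda>u. f u - emb ?c * D u"
      have htd: "twisted_der emb \<phi> ?h" by (rule td_minus[OF td td_smult[OF Dtd]])
      have "?h x = Top \<omega> m"
        using m \<open>y0 (f x) = emb ?c * y ^ k\<close> D(2) by (metis add_diff_cancel_right')
      then have inn: "inner_twisted \<phi> ?h" by (rule key[OF htd])
      have "\<forall>p. \<forall>u\<in>G p. ?h u \<in> G (p + l)"
        using f D(1) unfolding hom_der_iff by (blast intro: G_diff G_scale)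
      then have "?h \<in> hom_inner emb N x y \<phi> l"
        unfolding hom_inner_def hom_der_iff using htd inn by blast
      moreover have "(\<lambda>u. f u - (\<Sum>i<1. emb ((\<lambda>_. ?c) i) * ([D] ! i) u)) = ?h" by simp
      ultimately show "\<exists>c. (\<lambda>u. f u - (\<Sum>i<1. emb (c i) * ([D] ! i) u)) \<in> hom_inner emb N x y \<phi> l"
        by (intro exI[of _ "\<lambda>_. ?c"]) simp
    qed
    moreover have "(if \<omega> ^ (N - 1) \<noteq> 1 then 0 else if l \<ge> -1 \<and> int (N - 1) dvd (l + 1) then 1 else 0) = (1::nat)"
      using w' cond by simp
    ultimately show ?thesis by simp
  qed
qed

end

theorem proposition7p3:
  fixes emb :: "'k::field_char_0 \<Rightarrow> 'a::ring_1"
    and N :: nat and x y :: 'a and \<omega> :: 'k and \<phi> :: "'a \<Rightarrow> 'a"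
  assumes "N \<ge> 1"
    and "is_A_N emb N x y"
    and "\<omega> \<noteq> 0" and "\<omega> \<noteq> 1"
    and "k_alg_aut emb \<phi>"
    and "\<phi> x = emb \<omega> * x" and "\<phi> y = emb (\<omega> ^ (N - 1)) * y"
  shows "(N = 1 \<longrightarrow> (\<forall>d. twisted_der emb \<phi> d \<longrightarrow> inner_twisted \<phi> d)) \<and>
         (N \<ge> 2 \<longrightarrow>
            (\<forall>l::int. has_quot_dim emb (hom_der emb N x y \<phi> l) (hom_inner emb N x y \<phi> l)
               (if \<omega> ^ (N - 1) \<noteq> 1 then 0
                else if l \<ge> -1 \<and> int (N - 1) dvd (l + 1) then 1 else 0)))"
proof -
  interpret P73 emb N x y \<omega> \<phi>
  proof (unfold_locales)
    show "is_A_N emb N x y" by (rule assms(2))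
    show "1 \<le> N" by (rule assms(1))
    show "\<omega> \<noteq> 0" by (rule assms(3))
    show "\<omega> \<noteq> 1" by (rule assms(4))
    show "k_alg_aut emb \<phi>" by (rule assms(5))
    show "\<phi> x = emb \<omega> * x" by (rule assms(6))
    show "\<phi> y = emb (\<omega> ^ (N - 1)) * y" by (rule assms(7))
  qed
  show ?thesis using case_N1 main_N2 by blast
qed


end
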